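(* Let $X$ be a connected separable $T_1$-space. Then for all but countably many points $x \in X$, the subspace $X\setminus\{x\}$ has at most two connected components. *)

theory Defs
  imports "HOL-Analysis.Analysis"
begin

end

theory Submission
  imports Defs
begin

definition split3 :: "'a topology \<Rightarrow> 'a set \<Rightarrow> 'a set \<Rightarrow> 'a set \<Rightarrow> 'a set \<Rightarrow> bool" where
  "split3 X W U1 U2 U3 \<longleftrightarrow> openin X U1 \<and> openin X U2 \<and> openin X U3 \<and>
     U1 \<inter> U2 = {} \<and> U1 \<inter> U3 = {} \<and> U2 \<inter> U3 = {} \<and>
     U1 \<noteq> {} \<and> U2 \<noteq> {} \<and> U3 \<noteq> {} \<and> U1 \<union> U2 \<union> U3 = W"

lemma split3_swap12: "split3 X W U1 U2 U3 \<Longrightarrow> split3 X W U2 U1 U3"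
  unfolding split3_def by blast

lemma split3_swap13: "split3 X W U1 U2 U3 \<Longrightarrow> split3 X W U3 U2 U1"
  unfolding split3_def by blast

lemma sub1: "(S::'a set set) \<subseteq> {a} \<Longrightarrow> finite S \<and> card S \<le> 2"
proof -
  assume h: "S \<subseteq> {a}"
  then have "finite S" using finite_subset by blast
  moreover have "card S \<le> card {a}" using h by (intro card_mono) auto
  ultimately show ?thesis by simp
qed

lemma sub2: "(S::'a set set) \<subseteq> {a,b} \<Longrightarrow> finite S \<and> card S \<le> 2"
proof -
  assume h: "S \<subseteq> {a,b}"
  then have "finite S" using finite_subset by blast
  moreover have "card S \<le> card {a,b}" using h by (intro card_mono) auto
  moreover have "card {a,b} \<le> 2" by (simp add: card_insert_if)
  ultimately show ?thesis by simp
qed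

lemma exists_split3:
  assumes W: "openin X W"
    and bad: "\<not> (finite (connected_components_of (subtopology X W))
              \<and> card (connected_components_of (subtopology X W)) \<le> 2)"
  shows "\<exists>U1 U2 U3. split3 X W U1 U2 U3"
proof -
  let ?Y = "subtopology X W"
  have tY: "topspace ?Y = W" using W openin_subset by (simp add: Int_absorb1 openin_subset)
  have "\<not> connected_space ?Y"
  proof
    assume "connected_space ?Y"
    then obtain a where "connected_components_of ?Y \<subseteq> {a}"
      using connected_space_iff_components_subset_singleton by blast
    then have "finite (connected_components_of ?Y) \<and> card (connected_components_of ?Y) \<le> 2"
      using sub1 by blast
    with bad show False by blast
  qed
  then obtain A B where AB: "openin ?Y A" "openin ?Y B" "A \<union> B = W" "A \<inter> B = {}" "A \<noteq> {}" "B \<noteq> {}"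
    unfolding connected_space_eq tY by blast
  have oA: "openin X A" and oB: "openin X B"
    using AB(1,2) W openin_open_subtopology by blast+
  have notboth: "\<not> (connectedin X A \<and> connectedin X B)"
  proof
    assume cAB: "connectedin X A \<and> connectedin X B"
    have cYA: "connectedin ?Y A" and cYB: "connectedin ?Y B"
      using cAB AB(3) by (auto simp: connectedin_subtopology)
    have "connected_components_of ?Y \<subseteq> {A, B}"
    proof
      fix C assume C: "C \<in> connected_components_of ?Y"
      have Csub: "C \<subseteq> A \<union> B" using connected_components_of_subset[OF C] tY AB(3) by simp
      have Cne: "C \<noteq> {}" using nonempty_connected_components_of[OF C] .
      have cC: "connectedin ?Y C" using connectedin_connected_components_of[OF C] .
      have oYA: "openin ?Y A" "openin ?Y B" using AB by auto
      have "C \<inter> A = {} \<or> C \<inter> B = {}"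
        using connectedinD[OF cC oYA Csub] AB(4) by blast
      then show "C \<in> {A, B}"
      proof
        assume "C \<inter> A = {}"
        then have "C \<subseteq> B" using Csub by blast
        moreover have "B \<subseteq> C"
          using connected_components_of_maximal[OF C cYB] Cne \<open>C \<subseteq> B\<close>
          by (metis disjnt_def inf.absorb1)
        ultimately show ?thesis by blast
      next
        assume "C \<inter> B = {}"
        then have "C \<subseteq> A" using Csub by blast
        moreover have "A \<subseteq> C"
          using connected_components_of_maximal[OF C cYA] Cne \<open>C \<subseteq> A\<close>
          by (metis disjnt_def inf.absorb1)
        ultimately show ?thesis by blast
      qed
    qed
    then have "finite (connected_components_of ?Y) \<and> card (connected_components_of ?Y) \<le> 2"
      using sub2 by blast
    with bad show False by blast
  qed
  have main: "\<exists>U1 U2 U3. split3 X W U1 U2 U3"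
    if oP: "openin X P" and oQ: "openin X Q" and PQ: "P \<union> Q = W" "P \<inter> Q = {}" "Q \<noteq> {}"
      and nc: "\<not> connectedin X P" for P Q
  proof -
    have "P \<subseteq> topspace X" using oP openin_subset by blast
    then obtain E1 E2 where E: "openin X E1" "openin X E2" "P \<subseteq> E1 \<union> E2" "E1 \<inter> E2 \<inter> P = {}"
      "E1 \<inter> P \<noteq> {}" "E2 \<inter> P \<noteq> {}"
      using nc unfolding connectedin by blast
    have "split3 X W (E1 \<inter> P) (E2 \<inter> P) Q"
      unfolding split3_def
    proof (intro conjI)
      show "openin X (E1 \<inter> P)" using E(1) oP by (rule openin_Int)
      show "openin X (E2 \<inter> P)" using E(2) oP by (rule openin_Int)
      show "openin X Q" using oQ .
      show "E1 \<inter> P \<inter> (E2 \<inter> P) = {}" using E(4) by blast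
      show "E1 \<inter> P \<inter> Q = {}" using PQ(2) by blast
      show "E2 \<inter> P \<inter> Q = {}" using PQ(2) by blast
      show "E1 \<inter> P \<noteq> {}" "E2 \<inter> P \<noteq> {}" "Q \<noteq> {}" using E(5,6) PQ(3) by auto
      show "E1 \<inter> P \<union> E2 \<inter> P \<union> Q = W" using E(3) PQ(1) by blast
    qed
    then show ?thesis by blast
  qed
  show ?thesis
  proof (cases "connectedin X A")
    case True
    then have "\<not> connectedin X B" using notboth by blast
    show ?thesis
    proof (rule main[OF oB oA])
      show "B \<union> A = W" using AB(3) by blast
      show "B \<inter> A = {}" using AB(4) by blast
      show "A \<noteq> {}" using AB(5) .
      show "\<not> connectedin X B" using \<open>\<not> connectedin X B\<close> .
    qed
  next
    case False
    show ?thesis by (rule main[OF oA oB AB(3) AB(4) AB(6) False])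
  qed
qed

lemma conn_part:
  assumes X: "connected_space X" and oU: "openin X U" and oV: "openin X V"
    and UV: "U \<inter> V = {}" "U \<union> V = topspace X - {x}" and x: "x \<in> topspace X"
  shows "connectedin X (V \<union> {x})"
proof -
  let ?T = "V \<union> {x}"
  have T: "?T = topspace X - U" using UV x openin_subset[OF oU] by blast
  have cT: "closedin X ?T" using T oU by (simp add: closedin_diff)
  have Tsub: "?T \<subseteq> topspace X" using T by blast
  show ?thesis
    unfolding connectedin
  proof (intro conjI Tsub notI, elim exE conjE)
    fix E1 E2
    assume E: "openin X E1" "openin X E2" "?T \<subseteq> E1 \<union> E2" "E1 \<inter> E2 \<inter> ?T = {}"
      "E1 \<inter> ?T \<noteq> {}" "E2 \<inter> ?T \<noteq> {}"
    have key: "False" if oF1: "openin X F1" and oF2: "openin X F2" and xF1: "x \<in> F1"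
      and F: "?T \<subseteq> F1 \<union> F2" "F1 \<inter> F2 \<inter> ?T = {}" "F2 \<inter> ?T \<noteq> {}" for F1 F2
    proof -
      let ?P = "F2 \<inter> V"
      have P1: "?P = F2 \<inter> ?T" using xF1 F(2) by blast
      have P2: "?P = ?T - F1" using F xF1 by blast
      have "openin X ?P" by (rule openin_Int[OF oF2 oV])
      moreover have "closedin X ?P" using P2 cT oF1 by (simp add: closedin_diff)
      ultimately have "?P = {} \<or> ?P = topspace X"
        using connected_space_clopen_in[THEN iffD1, OF X, rule_format] by blast
      moreover have "?P \<noteq> {}" using P1 F(3) by blast
      moreover have "x \<notin> ?P" using P2 xF1 by blast
      ultimately show False using x by blast
    qed
    have "x \<in> E1 \<or> x \<in> E2" using E(3) by blast
    then show False
    proof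
      assume "x \<in> E1" show False by (rule key[OF E(1) E(2) \<open>x \<in> E1\<close> E(3) E(4) E(6)])
    next
      assume "x \<in> E2" show False
      proof (rule key[OF E(2) E(1) \<open>x \<in> E2\<close>])
        show "?T \<subseteq> E2 \<union> E1" using E(3) by blast
        show "E2 \<inter> E1 \<inter> ?T = {}" using E(4) by blast
        show "E1 \<inter> ?T \<noteq> {}" using E(5) .
      qed
    qed
  qed
qed

lemma key_contra:
  assumes X: "connected_space X" and x: "x \<in> topspace X"
    and sx: "split3 X (topspace X - {x}) U1 U2 U3"
    and sy: "split3 X (topspace X - {y}) V1 V2 V3"
    and yU: "y \<in> U1" and a: "a \<in> U2 \<inter> V2" and b: "b \<in> U3 \<inter> V3"
  shows False
proof -
  have ux: "U1 \<union> U2 \<union> U3 = topspace X - {x}" "U1 \<inter> U2 = {}" "U1 \<inter> U3 = {}"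
    "openin X U1" "openin X U2" "openin X U3"
    using sx unfolding split3_def by simp_all
  have vy: "V1 \<union> V2 \<union> V3 = topspace X - {y}" "V1 \<inter> V2 = {}" "V2 \<inter> V3 = {}"
    "openin X V1" "openin X V2" "openin X V3"
    using sy unfolding split3_def by simp_all
  have c: "connectedin X ((U2 \<union> U3) \<union> {x})"
  proof (rule conn_part[OF X ux(4) _ _ _ x])
    show "openin X (U2 \<union> U3)" using ux(5,6) by (rule openin_Un)
    show "U1 \<inter> (U2 \<union> U3) = {}" using ux(2,3) by blast
    show "U1 \<union> (U2 \<union> U3) = topspace X - {x}" using ux(1) by (simp add: Un_assoc)
  qed
  have o2: "openin X (V1 \<union> V3)" using vy(4,6) by (rule openin_Un)
  have s: "(U2 \<union> U3) \<union> {x} \<subseteq> V2 \<union> (V1 \<union> V3)"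
  proof -
    have "(U2 \<union> U3) \<union> {x} \<subseteq> topspace X - {y}"
      using ux(1,2,3) yU x by blast
    then show ?thesis using vy(1) by blast
  qed
  have d: "V2 \<inter> (V1 \<union> V3) \<inter> ((U2 \<union> U3) \<union> {x}) = {}"
    using vy(2,3) by blast
  have n1: "V2 \<inter> ((U2 \<union> U3) \<union> {x}) \<noteq> {}" using a by blast
  have n2: "(V1 \<union> V3) \<inter> ((U2 \<union> U3) \<union> {x}) \<noteq> {}" using b by blast
  show False by (rule connectedinD[OF c vy(5) o2 s d n1 n2])
qed

theorem theorem7p3:
  fixes X :: "'a topology"
  assumes "connected_space X"
    and "separable_space X"
    and "t1_space X"
  shows "countable {x \<in> topspace X.
           \<not> (finite (connected_components_of (subtopology X (topspace X - {x})))
              \<and> card (connected_components_of (subtopology X (topspace X - {x}))) \<le> 2)}"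
proof -
  let ?S = "{x \<in> topspace X.
           \<not> (finite (connected_components_of (subtopology X (topspace X - {x})))
              \<and> card (connected_components_of (subtopology X (topspace X - {x}))) \<le> 2)}"
  obtain D where D: "countable D" "D \<subseteq> topspace X" "X closure_of D = topspace X"
    using assms(2) unfolding separable_space_def by blast
  have Dint: "\<And>T. openin X T \<Longrightarrow> T \<noteq> {} \<Longrightarrow> \<exists>d. d \<in> D \<inter> T"
  proof -
    have "\<forall>T. openin X T \<and> T \<noteq> {} \<longrightarrow> D \<inter> T \<noteq> {}"
      using D(3) dense_intersects_open by blast
    then show "\<And>T. openin X T \<Longrightarrow> T \<noteq> {} \<Longrightarrow> \<exists>d. d \<in> D \<inter> T" by blast
  qed
  have ex: "\<exists>U. split3 X (topspace X - {x}) (fst U) (fst (snd U)) (snd (snd U))" if "x \<in> ?S" for x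
  proof -
    have "openin X (topspace X - {x})"
    proof -
      have "x \<in> topspace X" using that by (simp only: mem_Collect_eq)
      then have "closedin X {x}" using t1_space_closedin_singleton[THEN iffD1, OF assms(3)] by blast
      then show ?thesis by (rule openin_diff[OF openin_topspace])
    qed
    moreover have "\<not> (finite (connected_components_of (subtopology X (topspace X - {x})))
              \<and> card (connected_components_of (subtopology X (topspace X - {x}))) \<le> 2)"
      using that unfolding mem_Collect_eq by (rule conjunct2)
    ultimately obtain U1 U2 U3 where u: "split3 X (topspace X - {x}) U1 U2 U3"
      using exists_split3 by blast
    have "split3 X (topspace X - {x}) (fst (U1, U2, U3)) (fst (snd (U1, U2, U3))) (snd (snd (U1, U2, U3)))"
      using u by simp
    then show ?thesis by (rule exI)
  qed
  define U where "U x = (SOME U. split3 X (topspace X - {x}) (fst U) (fst (snd U)) (snd (snd U)))" for x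
  define U1 where "U1 x = fst (U x)" for x
  define U2 where "U2 x = fst (snd (U x))" for x
  define U3 where "U3 x = snd (snd (U x))" for x
  have sp: "split3 X (topspace X - {x}) (U1 x) (U2 x) (U3 x)" if "x \<in> ?S" for x
    unfolding U1_def U2_def U3_def U_def using someI_ex[OF ex[OF that]] .
  define pick where "pick T = (SOME d. d \<in> D \<inter> T)" for T
  have pick: "pick T \<in> D \<inter> T" if "openin X T" "T \<noteq> {}" for T
    unfolding pick_def using someI_ex[OF Dint[OF that]] .
  define f where "f x = (pick (U1 x), pick (U2 x), pick (U3 x))" for x
  have fD: "f ` ?S \<subseteq> D \<times> D \<times> D"
  proof
    fix z assume "z \<in> f ` ?S"
    then obtain x where x2: "z = f x" and x1: "x \<in> ?S" by (rule imageE)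
    note x = x1 x2
    have "pick (U1 x) \<in> D" "pick (U2 x) \<in> D" "pick (U3 x) \<in> D"
    proof -
      have s: "openin X (U1 x)" "openin X (U2 x)" "openin X (U3 x)"
        "U1 x \<noteq> {}" "U2 x \<noteq> {}" "U3 x \<noteq> {}"
        using sp[OF x(1)] unfolding split3_def by simp_all
      show "pick (U1 x) \<in> D" using pick[OF s(1) s(4)] by simp
      show "pick (U2 x) \<in> D" using pick[OF s(2) s(5)] by simp
      show "pick (U3 x) \<in> D" using pick[OF s(3) s(6)] by simp
    qed
    then show "z \<in> D \<times> D \<times> D" using x(2) unfolding f_def by simp
  qed
  have inj: "inj_on f ?S"
  proof (rule inj_onI, rule ccontr)
    fix x y assume xS: "x \<in> ?S" and yS: "y \<in> ?S" and fxy: "f x = f y" and ne: "x \<noteq> y"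
    have sx: "split3 X (topspace X - {x}) (U1 x) (U2 x) (U3 x)" using sp[OF xS] .
    have sy: "split3 X (topspace X - {y}) (U1 y) (U2 y) (U3 y)" using sp[OF yS] .
    have xt: "x \<in> topspace X" using xS by (simp only: mem_Collect_eq)
    have yt: "y \<in> topspace X" using yS by (simp only: mem_Collect_eq)
    have p1: "pick (U1 x) \<in> U1 x \<inter> U1 y" and p2: "pick (U2 x) \<in> U2 x \<inter> U2 y"
      and p3: "pick (U3 x) \<in> U3 x \<inter> U3 y"
    proof -
      have e: "pick (U1 x) = pick (U1 y)" "pick (U2 x) = pick (U2 y)" "pick (U3 x) = pick (U3 y)"
        using fxy unfolding f_def by simp_all
      have s: "openin X (U1 x)" "openin X (U2 x)" "openin X (U3 x)"
        "U1 x \<noteq> {}" "U2 x \<noteq> {}" "U3 x \<noteq> {}"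
        using sx unfolding split3_def by simp_all
      have t: "openin X (U1 y)" "openin X (U2 y)" "openin X (U3 y)"
        "U1 y \<noteq> {}" "U2 y \<noteq> {}" "U3 y \<noteq> {}"
        using sy unfolding split3_def by simp_all
      have "pick (U1 x) \<in> U1 x" "pick (U2 x) \<in> U2 x" "pick (U3 x) \<in> U3 x"
        using pick[OF s(1) s(4)] pick[OF s(2) s(5)] pick[OF s(3) s(6)] by simp_all
      moreover have "pick (U1 y) \<in> U1 y" "pick (U2 y) \<in> U2 y" "pick (U3 y) \<in> U3 y"
        using pick[OF t(1) t(4)] pick[OF t(2) t(5)] pick[OF t(3) t(6)] by simp_all
      ultimately show "pick (U1 x) \<in> U1 x \<inter> U1 y" "pick (U2 x) \<in> U2 x \<inter> U2 y"
        "pick (U3 x) \<in> U3 x \<inter> U3 y" using e by auto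
    qed
    have "y \<in> U1 x \<union> U2 x \<union> U3 x" using sx yt ne unfolding split3_def by blast
    then show False
    proof (elim UnE)
      assume "y \<in> U1 x"
      then show False using key_contra[OF assms(1) xt sx sy _ p2 p3] by blast
    next
      assume "y \<in> U2 x"
      then show False using key_contra[OF assms(1) xt split3_swap12[OF sx] split3_swap12[OF sy] _ p1 p3] by blast
    next
      assume "y \<in> U3 x"
      then show False using key_contra[OF assms(1) xt split3_swap13[OF sx] split3_swap13[OF sy] _ p2 p1] by blast
    qed
  qed
  have "countable (D \<times> D \<times> D)" using D(1) by (intro countable_SIGMA)
  then have "countable (f ` ?S)" by (rule countable_subset[OF fD])
  then show ?thesis by (rule countable_image_inj_on[OF _ inj])
qed

end
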